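(* Let $K$ be a field of characteristic $0$ with algebraic closure $\bar K$ and $G_K=\operatorname{Gal}(\bar K/K)$, let $V$ be an algebraic variety defined over $K$, let $\mathcal{A}_V=\operatorname{Aut}(V)$ be the group of $\bar K$-automorphisms of $V$, and let $f:V\to V$ be a $\bar K$-endomorphism whose field of moduli is contained in $K$, i.e., for every $\sigma\in G_K$ there is $\varphi_\sigma\in\mathcal{A}_V$ with $f^\sigma=f^{\varphi_\sigma}$. Let $\mathcal{A}_f=\{\alpha\in\mathcal{A}_V: f^\alpha=f\}$, so that $\varphi_\sigma$ is well defined as an element of $\mathcal{A}_f\backslash\mathcal{A}_V$, giving a map $\varphi:G_K\to\mathcal{A}_f\backslash\mathcal{A}_V$. Let $\mathcal{N}_f$ be the normalizer of $\mathcal{A}_f$ in $\mathcal{A}_V$. Assume that $\mathcal{A}_f$ is finite and that $\mathcal{A}_f$ is defined over $K$ (i.e., $\alpha^\sigma\in\mathcal{A}_f$ for all $\alpha\in\mathcal{A}_f$, $\sigma\in G_K$). Then: (a) $\varphi_\sigma\in\mathcal{N}_f$ for every $\sigma\in G_K$ (for any choice of representative), and $\varphi:G_K\to\mathcal{A}_f\backslash\mathcal{N}_f$ is a $1$-cocycle with values in a group, i.e., $\varphi_{\sigma\tau}\equiv\varphi_\tau\varphi_\sigma^\tau\pmod{\mathcal{A}_f}$ for all $\sigma,\tau\in G_K$; hence it gives an element of $H^1(G_K,\mathcal{A}_f\backslash\mathcal{N}_f)$. (b) The following are equivalent: (1) there is $\gamma\in\mathcal{A}_V$ such that $f^\gamma$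 is defined over $K$ (i.e., $K$ is a field of definition for $f$); (2) there is $\delta\in\mathcal{A}_V$ such that $\varphi_\sigma=\mathcal{A}_f\delta^{-1}\delta^\sigma$ for all $\sigma\in G_K$ (i.e., $\varphi$ is a $G_K$-to-$\mathcal{A}_f\backslash\mathcal{N}_f$ coboundary).
   Context: For $\varphi\in\mathcal{A}_V$, $f^\varphi:=\varphi^{-1}\circ f\circ\varphi$. For $\sigma\in G_K$, $f^\sigma$ and $\varphi^\sigma$ denote the maps obtained by applying $\sigma$ to coefficients; Galois action is written exponentially as a right action, so $(x^\sigma)^\tau=x^{\sigma\tau}$, and $(f^\varphi)^\sigma=(f^\sigma)^{\varphi^\sigma}$. *)

theory Defs
  imports "HOL-Algebra.Group_Action"
begin

text \<open>E is the monoid of Kbar-endomorphisms of V under composition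
  (mult x y = x o y), so Units E is Aut(V). G is the absolute Galois group G_K.
  gal x s is x^s, the endomorphism obtained by applying s to coefficients;
  it is a right action by monoid endomorphisms.\<close>

locale galois_endo_action =
  E: monoid E + G: group G
  for E (structure) and G (structure) and gal :: "'e \<Rightarrow> 'g \<Rightarrow> 'e" +
  assumes gal_closed: "\<lbrakk>x \<in> carrier E; s \<in> carrier G\<rbrakk> \<Longrightarrow> gal x s \<in> carrier E"
    and gal_mult: "\<lbrakk>x \<in> carrier E; y \<in> carrier E; s \<in> carrier G\<rbrakk>
        \<Longrightarrow> gal (x \<otimes>\<^bsub>E\<^esub> y) s = gal x s \<otimes>\<^bsub>E\<^esub> gal y s"
    and gal_one: "s \<in> carrier G \<Longrightarrow> gal \<one>\<^bsub>E\<^esub> s = \<one>\<^bsub>E\<^esub>"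
    and gal_comp: "\<lbrakk>x \<in> carrier E; s \<in> carrier G; t \<in> carrier G\<rbrakk>
        \<Longrightarrow> gal (gal x s) t = gal x (s \<otimes>\<^bsub>G\<^esub> t)"
    and gal_id: "x \<in> carrier E \<Longrightarrow> gal x \<one>\<^bsub>G\<^esub> = x"

definition conj_by :: "('e, 'm) monoid_scheme \<Rightarrow> 'e \<Rightarrow> 'e \<Rightarrow> 'e" where
  "conj_by E f \<phi> = inv\<^bsub>E\<^esub> \<phi> \<otimes>\<^bsub>E\<^esub> f \<otimes>\<^bsub>E\<^esub> \<phi>"

abbreviation AutGrp :: "('e, 'm) monoid_scheme \<Rightarrow> 'e monoid" where
  "AutGrp E \<equiv> units_of E"

definition Aut_f :: "('e, 'm) monoid_scheme \<Rightarrow> 'e \<Rightarrow> 'e set" where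
  "Aut_f E f = {\<alpha> \<in> Units E. conj_by E f \<alpha> = f}"

definition Norm_f :: "('e, 'm) monoid_scheme \<Rightarrow> 'e \<Rightarrow> 'e set" where
  "Norm_f E f = normalizer (AutGrp E) (Aut_f E f)"

definition defined_over_K :: "('g, 'n) monoid_scheme \<Rightarrow> ('e \<Rightarrow> 'g \<Rightarrow> 'e) \<Rightarrow> 'e \<Rightarrow> bool" where
  "defined_over_K G gal x \<longleftrightarrow> (\<forall>s \<in> carrier G. gal x s = x)"

end

theory Submission imports Defs "HOL-Algebra.Zassenhaus" begin

lemma (in monoid) inv_mult_U:
  assumes "a \<in> Units G" "b \<in> Units G"
  shows "inv (a \<otimes> b) = inv b \<otimes> inv a"
proof -
  have c: "a \<in> carrier G" "b \<in> carrier G" "inv a \<in> carrier G" "inv b \<in> carrier G" using assms by auto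
  have "(a \<otimes> b) \<otimes> (inv b \<otimes> inv a) = \<one>"
    using assms c by (simp add: m_assoc[symmetric]) (simp add: m_assoc)
  moreover have "(inv b \<otimes> inv a) \<otimes> (a \<otimes> b) = \<one>"
    using assms c by (simp add: m_assoc[symmetric]) (simp add: m_assoc)
  ultimately show ?thesis using inv_unique' c by (metis m_closed)
qed

context galois_endo_action begin

lemma gal_unit:
  assumes "\<phi> \<in> Units E" "s \<in> carrier G"
  shows "gal \<phi> s \<in> Units E" "gal (inv \<phi>) s = inv (gal \<phi> s)"
proof -
  have c: "\<phi> \<in> carrier E" "inv \<phi> \<in> carrier E" using assms by auto
  have 1: "gal \<phi> s \<otimes> gal (inv \<phi>) s = \<one>"
    using gal_mult[OF c assms(2)] gal_one[OF assms(2)] assms by simp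
  have 2: "gal (inv \<phi>) s \<otimes> gal \<phi> s = \<one>"
    using gal_mult[OF c(2) c(1) assms(2)] gal_one[OF assms(2)] assms by simp
  have cc: "gal \<phi> s \<in> carrier E" "gal (inv \<phi>) s \<in> carrier E" using c gal_closed assms by auto
  show "gal \<phi> s \<in> Units E" using 1 2 cc unfolding Units_def by blast
  show "gal (inv \<phi>) s = inv (gal \<phi> s)" using E.inv_unique' 1 2 cc by blast
qed

lemma conj_closed: "f \<in> carrier E \<Longrightarrow> \<phi> \<in> Units E \<Longrightarrow> conj_by E f \<phi> \<in> carrier E"
  unfolding conj_by_def by auto

lemma conj_gal:
  assumes "f \<in> carrier E" "\<phi> \<in> Units E" "s \<in> carrier G"
  shows "gal (conj_by E f \<phi>) s = conj_by E (gal f s) (gal \<phi> s)"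
  using assms gal_unit[OF assms(2,3)] unfolding conj_by_def
  by (simp add: gal_mult E.Units_closed gal_closed)

lemma conj_comp:
  assumes "f \<in> carrier E" "a \<in> Units E" "b \<in> Units E"
  shows "conj_by E (conj_by E f a) b = conj_by E f (a \<otimes> b)"
  using assms unfolding conj_by_def
  by (simp add: E.inv_mult_U E.m_assoc E.Units_closed)

lemma conj_one: "f \<in> carrier E \<Longrightarrow> conj_by E f \<one> = f"
  unfolding conj_by_def by simp

lemma conj_eq:
  assumes "f \<in> carrier E" "a \<in> Units E" "b \<in> Units E" "conj_by E f a = conj_by E f b"
  shows "a \<otimes> inv b \<in> Aut_f E f"
proof -
  have 1: "conj_by E f (a \<otimes> inv b) = conj_by E (conj_by E f a) (inv b)"
    using assms(1-3) conj_comp by simp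
  have 2: "conj_by E (conj_by E f b) (inv b) = f" using assms(1-3) conj_comp conj_one by simp
  have "conj_by E f (a \<otimes> inv b) = f" using 1 2 assms(4) by simp
  then show ?thesis using assms unfolding Aut_f_def by auto
qed

lemma Aut_sub: assumes "f \<in> carrier E" shows "subgroup (Aut_f E f) (units_of E)"
proof
  show "Aut_f E f \<subseteq> carrier (units_of E)" by (auto simp: Aut_f_def units_of_carrier)
  fix x y assume x: "x \<in> Aut_f E f" and y: "y \<in> Aut_f E f"
  then show "x \<otimes>\<^bsub>units_of E\<^esub> y \<in> Aut_f E f"
    using assms conj_comp[of f x y] by (auto simp: Aut_f_def units_of_mult)
  show "inv\<^bsub>units_of E\<^esub> x \<in> Aut_f E f"
  proof -
    have u: "x \<in> Units E" "conj_by E f x = f" using x by (auto simp: Aut_f_def)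
    have "conj_by E (conj_by E f x) (inv x) = f" using u(1) assms conj_comp conj_one by simp
    then have "conj_by E f (inv x) = f" using u(2) by simp
    then show ?thesis using u by (simp add: E.units_of_inv Aut_f_def)
  qed
next
  show "\<one>\<^bsub>units_of E\<^esub> \<in> Aut_f E f" using assms conj_one by (simp add: Aut_f_def units_of_one)
qed


lemma conj_in_Aut:
  assumes f: "f \<in> carrier E" and p: "\<phi> \<in> Units E" and x: "x \<in> Units E"
  shows "x \<in> Aut_f E (conj_by E f \<phi>) \<longleftrightarrow> \<phi> \<otimes> x \<otimes> inv \<phi> \<in> Aut_f E f"
proof -
  have c: "\<phi> \<otimes> x \<otimes> inv \<phi> \<in> Units E" using p x by auto
  have e1: "conj_by E (conj_by E f \<phi>) x = conj_by E f (\<phi> \<otimes> x)" using conj_comp f p x by simp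
  have e2: "conj_by E f (\<phi> \<otimes> x \<otimes> inv \<phi>) = conj_by E (conj_by E f (\<phi> \<otimes> x)) (inv \<phi>)"
    using conj_comp f p x by simp
  have e3: "conj_by E f (\<phi> \<otimes> x) = conj_by E (conj_by E f (\<phi> \<otimes> x \<otimes> inv \<phi>)) \<phi>"
  proof -
    have "\<phi> \<otimes> x \<otimes> inv \<phi> \<otimes> \<phi> = \<phi> \<otimes> x" using p x by (simp add: E.m_assoc E.Units_closed)
    then show ?thesis using conj_comp[OF f c p] by simp
  qed
  have e4: "conj_by E (conj_by E f \<phi>) (inv \<phi>) = f" using conj_comp f p conj_one by simp
  have e5: "conj_by E (conj_by E f \<phi>) x = conj_by E f \<phi> \<longleftrightarrow> conj_by E f (\<phi> \<otimes> x \<otimes> inv \<phi>) = f"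
    using e1 e2 e3 e4 by metis
  show ?thesis using e5 c x unfolding Aut_f_def by auto
qed

lemma Aut_gal:
  assumes f: "f \<in> carrier E" and s: "s \<in> carrier G"
    and Af_K: "\<forall>\<alpha> \<in> Aut_f E f. \<forall>s \<in> carrier G. gal \<alpha> s \<in> Aut_f E f"
  shows "Aut_f E (gal f s) = Aut_f E f"
proof
  have si: "inv\<^bsub>G\<^esub> s \<in> carrier G" using s by simp
  have bk: "\<And>x. x \<in> carrier E \<Longrightarrow> gal (gal x (inv\<^bsub>G\<^esub> s)) s = x"
    using gal_comp gal_id s si by simp
  have bk2: "\<And>x. x \<in> carrier E \<Longrightarrow> gal (gal x s) (inv\<^bsub>G\<^esub> s) = x"
    using gal_comp gal_id s si by simp
  show "Aut_f E (gal f s) \<subseteq> Aut_f E f"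
  proof
    fix x assume x: "x \<in> Aut_f E (gal f s)"
    then have xu: "x \<in> Units E" and xc: "conj_by E (gal f s) x = gal f s" by (auto simp: Aut_f_def)
    define y where "y = gal x (inv\<^bsub>G\<^esub> s)"
    have yu: "y \<in> Units E" using gal_unit xu si y_def by simp
    have gy: "gal y s = x" using bk xu y_def by auto
    have "gal (conj_by E f y) s = gal f s" using conj_gal[OF f yu s] gy xc by simp
    then have "gal (gal (conj_by E f y) s) (inv\<^bsub>G\<^esub> s) = gal (gal f s) (inv\<^bsub>G\<^esub> s)" by simp
    then have "conj_by E f y = f" using bk2 f conj_closed[OF f yu] by simp
    then have "y \<in> Aut_f E f" using yu by (simp add: Aut_f_def)
    then show "x \<in> Aut_f E f" using Af_K s gy by metis
  qed
  show "Aut_f E f \<subseteq> Aut_f E (gal f s)"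
  proof
    fix x assume x: "x \<in> Aut_f E f"
    then have xu: "x \<in> Units E" by (auto simp: Aut_f_def)
    define y where "y = gal x (inv\<^bsub>G\<^esub> s)"
    have yA: "y \<in> Aut_f E f" using Af_K x si y_def by simp
    then have yu: "y \<in> Units E" and yc: "conj_by E f y = f" by (auto simp: Aut_f_def)
    have gy: "gal y s = x" using bk xu y_def by auto
    have "conj_by E (gal f s) x = gal f s" using conj_gal[OF f yu s] gy yc by simp
    then show "x \<in> Aut_f E (gal f s)" using xu by (simp add: Aut_f_def)
  qed
qed

lemma cos_char:
  "H \<subseteq> Units E \<Longrightarrow> a \<in> Units E \<Longrightarrow> x \<in> H #>\<^bsub>units_of E\<^esub> a \<longleftrightarrow> (\<exists>h\<in>H. x = h \<otimes> a)"
  unfolding r_coset_def by (auto simp: units_of_mult)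

lemma cos_eq:
  assumes f: "f \<in> carrier E" and a: "a \<in> Units E" and b: "b \<in> Units E"
    and e: "conj_by E f a = conj_by E f b"
  shows "Aut_f E f #>\<^bsub>units_of E\<^esub> a = Aut_f E f #>\<^bsub>units_of E\<^esub> b"
proof -
  have h: "a \<otimes> inv b \<in> Aut_f E f" using conj_eq[OF f a b e] .
  have "a = (a \<otimes> inv b) \<otimes> b" using a b by (simp add: E.m_assoc E.Units_closed)
  then have "a \<in> Aut_f E f #>\<^bsub>units_of E\<^esub> b" using cos_char[of "Aut_f E f" b] h b
    by (auto simp: Aut_f_def)
  then show ?thesis using group.repr_independence[OF E.units_group _ _ Aut_sub[OF f]] b
    by (simp add: units_of_carrier)
qed

lemma cos_conj:
  assumes f: "f \<in> carrier E" and a: "a \<in> Units E" and b: "b \<in> Units E"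
    and e: "Aut_f E f #>\<^bsub>units_of E\<^esub> a = Aut_f E f #>\<^bsub>units_of E\<^esub> b"
  shows "conj_by E f a = conj_by E f b"
proof -
  have "a \<in> Aut_f E f #>\<^bsub>units_of E\<^esub> a"
    using group.rcos_self[OF E.units_group _ Aut_sub[OF f]] a by (simp add: units_of_carrier)
  then have "a \<in> Aut_f E f #>\<^bsub>units_of E\<^esub> b" using e by simp
  then obtain h where h: "h \<in> Aut_f E f" "a = h \<otimes> b" using cos_char[of "Aut_f E f" b] b
    by (auto simp: Aut_f_def)
  then have hu: "h \<in> Units E" "conj_by E f h = f" by (auto simp: Aut_f_def)
  show ?thesis using conj_comp[OF f hu(1) b] hu h by simp
qed

end

lemma lr_coset_units:
  assumes "monoid E" "\<phi> \<in> Units E" "H \<subseteq> Units E"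
  shows "\<phi> <#\<^bsub>units_of E\<^esub> H #>\<^bsub>units_of E\<^esub> inv\<^bsub>units_of E\<^esub> \<phi> = (\<lambda>h. \<phi> \<otimes>\<^bsub>E\<^esub> h \<otimes>\<^bsub>E\<^esub> inv\<^bsub>E\<^esub> \<phi>) ` H"
  using assms unfolding l_coset_def r_coset_def
  by (auto simp: units_of_mult monoid.units_of_inv)

theorem proposition10:
  fixes E (structure) and G :: "('g, 'n) monoid_scheme" and gal :: "'e \<Rightarrow> 'g \<Rightarrow> 'e" and f :: 'e
  assumes act: "galois_endo_action E G gal"
    and f_end: "f \<in> carrier E"
    and moduli: "\<forall>s \<in> carrier G. \<exists>\<phi> \<in> Units E. gal f s = conj_by E f \<phi>"
    and fin: "finite (Aut_f E f)"
    and Af_K: "\<forall>\<alpha> \<in> Aut_f E f. \<forall>s \<in> carrier G. gal \<alpha> s \<in> Aut_f E f"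
  shows
    "(\<forall>s \<in> carrier G. \<forall>\<phi> \<in> Units E. gal f s = conj_by E f \<phi> \<longrightarrow> \<phi> \<in> Norm_f E f)
     \<and> normal (Aut_f E f) ((AutGrp E)\<lparr>carrier := Norm_f E f\<rparr>)
     \<and> (\<forall>s \<in> carrier G. \<forall>t \<in> carrier G. \<forall>\<phi>s \<in> Units E. \<forall>\<phi>t \<in> Units E. \<forall>\<phi>st \<in> Units E.
          gal f s = conj_by E f \<phi>s \<longrightarrow> gal f t = conj_by E f \<phi>t
          \<longrightarrow> gal f (s \<otimes>\<^bsub>G\<^esub> t) = conj_by E f \<phi>st
          \<longrightarrow> \<phi>st \<in> Aut_f E f #>\<^bsub>AutGrp E\<^esub> (\<phi>t \<otimes> gal \<phi>s t))
     \<and> ((\<exists>\<gamma> \<in> Units E. defined_over_K G gal (conj_by E f \<gamma>))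
        \<longleftrightarrow> (\<exists>\<delta> \<in> Units E. \<forall>s \<in> carrier G. \<forall>\<phi> \<in> Units E.
               gal f s = conj_by E f \<phi> \<longrightarrow>
               Aut_f E f #>\<^bsub>AutGrp E\<^esub> \<phi> = Aut_f E f #>\<^bsub>AutGrp E\<^esub> (inv \<delta> \<otimes> gal \<delta> s)))"
proof -
  interpret galois_endo_action E G gal by (rule act)
  let ?A = "Aut_f E f"
  have Asub: "?A \<subseteq> Units E" by (auto simp: Aut_f_def)
  have P1: "\<forall>s \<in> carrier G. \<forall>\<phi> \<in> Units E. gal f s = conj_by E f \<phi> \<longrightarrow> \<phi> \<in> Norm_f E f"
  proof (intro ballI impI)
    fix s \<phi> assume s: "s \<in> carrier G" and p: "\<phi> \<in> Units E" and e: "gal f s = conj_by E f \<phi>"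
    have AA: "Aut_f E (conj_by E f \<phi>) = ?A" using Aut_gal[OF f_end s Af_K] e by simp
    have img: "(\<lambda>h. \<phi> \<otimes> h \<otimes> inv \<phi>) ` ?A = ?A"
    proof
      show "(\<lambda>h. \<phi> \<otimes> h \<otimes> inv \<phi>) ` ?A \<subseteq> ?A"
        using conj_in_Aut[OF f_end p] AA Asub by auto
      show "?A \<subseteq> (\<lambda>h. \<phi> \<otimes> h \<otimes> inv \<phi>) ` ?A"
      proof
        fix y assume y: "y \<in> ?A"
        then have yu: "y \<in> Units E" using Asub by auto
        define x where "x = inv \<phi> \<otimes> y \<otimes> \<phi>"
        have xu: "x \<in> Units E" using x_def p yu by auto
        have "\<phi> \<otimes> x \<otimes> inv \<phi> = y" using x_def p yu
          by (simp add: E.m_assoc E.Units_closed) (simp add: E.m_assoc[symmetric] E.Units_closed)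
        moreover then have "x \<in> ?A" using conj_in_Aut[OF f_end p xu] AA y by simp
        ultimately show "y \<in> (\<lambda>h. \<phi> \<otimes> h \<otimes> inv \<phi>) ` ?A" by force
      qed
    qed
    show "\<phi> \<in> Norm_f E f"
      unfolding Norm_f_def normalizer_def stabilizer_def
      using lr_coset_units[OF E.monoid_axioms p Asub] img p Asub
      by (simp add: units_of_carrier)
  qed
  have P2: "normal ?A ((AutGrp E)\<lparr>carrier := Norm_f E f\<rparr>)"
    unfolding Norm_f_def using group.subgroup_in_normalizer[OF E.units_group Aut_sub[OF f_end]] .
  have P3: "\<forall>s \<in> carrier G. \<forall>t \<in> carrier G. \<forall>\<phi>s \<in> Units E. \<forall>\<phi>t \<in> Units E. \<forall>\<phi>st \<in> Units E.
          gal f s = conj_by E f \<phi>s \<longrightarrow> gal f t = conj_by E f \<phi>t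
          \<longrightarrow> gal f (s \<otimes>\<^bsub>G\<^esub> t) = conj_by E f \<phi>st
          \<longrightarrow> \<phi>st \<in> ?A #>\<^bsub>AutGrp E\<^esub> (\<phi>t \<otimes> gal \<phi>s t)"
  proof (intro ballI impI)
    fix s t \<phi>s \<phi>t \<phi>st assume s: "s \<in> carrier G" and t: "t \<in> carrier G"
      and us: "\<phi>s \<in> Units E" and ut: "\<phi>t \<in> Units E" and ust: "\<phi>st \<in> Units E"
      and es: "gal f s = conj_by E f \<phi>s" and et: "gal f t = conj_by E f \<phi>t"
      and est: "gal f (s \<otimes>\<^bsub>G\<^esub> t) = conj_by E f \<phi>st"
    have gu: "gal \<phi>s t \<in> Units E" using gal_unit us t by simp
    have "conj_by E f \<phi>st = gal (gal f s) t" using est gal_comp f_end s t by simp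
    also have "\<dots> = conj_by E (conj_by E f \<phi>t) (gal \<phi>s t)"
      using es conj_gal[OF f_end us t] et by simp
    also have "\<dots> = conj_by E f (\<phi>t \<otimes> gal \<phi>s t)" using conj_comp[OF f_end ut gu] .
    finally have "conj_by E f \<phi>st = conj_by E f (\<phi>t \<otimes> gal \<phi>s t)" .
    then have "?A #>\<^bsub>AutGrp E\<^esub> \<phi>st = ?A #>\<^bsub>AutGrp E\<^esub> (\<phi>t \<otimes> gal \<phi>s t)"
      using cos_eq[OF f_end ust] ut gu by blast
    moreover have "\<phi>st \<in> ?A #>\<^bsub>AutGrp E\<^esub> \<phi>st"
      using group.rcos_self[OF E.units_group _ Aut_sub[OF f_end]] ust by (simp add: units_of_carrier)
    ultimately show "\<phi>st \<in> ?A #>\<^bsub>AutGrp E\<^esub> (\<phi>t \<otimes> gal \<phi>s t)" by simp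
  qed
  have P4: "(\<exists>\<gamma> \<in> Units E. defined_over_K G gal (conj_by E f \<gamma>))
        \<longleftrightarrow> (\<exists>\<delta> \<in> Units E. \<forall>s \<in> carrier G. \<forall>\<phi> \<in> Units E.
               gal f s = conj_by E f \<phi> \<longrightarrow>
               ?A #>\<^bsub>AutGrp E\<^esub> \<phi> = ?A #>\<^bsub>AutGrp E\<^esub> (inv \<delta> \<otimes> gal \<delta> s))"
  proof
    assume "\<exists>\<gamma> \<in> Units E. defined_over_K G gal (conj_by E f \<gamma>)"
    then obtain \<gamma> where gu: "\<gamma> \<in> Units E" and d: "\<forall>s\<in>carrier G. gal (conj_by E f \<gamma>) s = conj_by E f \<gamma>"
      unfolding defined_over_K_def by blast
    have igu: "inv \<gamma> \<in> Units E" using gu by simp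
    show "\<exists>\<delta> \<in> Units E. \<forall>s \<in> carrier G. \<forall>\<phi> \<in> Units E.
               gal f s = conj_by E f \<phi> \<longrightarrow>
               ?A #>\<^bsub>AutGrp E\<^esub> \<phi> = ?A #>\<^bsub>AutGrp E\<^esub> (inv \<delta> \<otimes> gal \<delta> s)"
    proof (intro bexI[of _ "inv \<gamma>"] ballI impI)
      fix s \<phi> assume s: "s \<in> carrier G" and p: "\<phi> \<in> Units E" and e: "gal f s = conj_by E f \<phi>"
      have hu: "gal (inv \<gamma>) s \<in> Units E" using gal_unit igu s by simp
      have ff: "f = conj_by E (conj_by E f \<gamma>) (inv \<gamma>)" using conj_comp[OF f_end gu igu] gu conj_one f_end by simp
      have "gal f s = conj_by E (gal (conj_by E f \<gamma>) s) (gal (inv \<gamma>) s)"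
        using conj_gal[OF conj_closed[OF f_end gu] igu s] ff by simp
      also have "\<dots> = conj_by E f (\<gamma> \<otimes> gal (inv \<gamma>) s)"
        using d s conj_comp[OF f_end gu hu] by simp
      finally have "conj_by E f \<phi> = conj_by E f (inv (inv \<gamma>) \<otimes> gal (inv \<gamma>) s)" using e gu by simp
      then show "?A #>\<^bsub>AutGrp E\<^esub> \<phi> = ?A #>\<^bsub>AutGrp E\<^esub> (inv (inv \<gamma>) \<otimes> gal (inv \<gamma>) s)"
        using cos_eq[OF f_end p] gu hu by simp
    qed (rule igu)
  next
    assume "\<exists>\<delta> \<in> Units E. \<forall>s \<in> carrier G. \<forall>\<phi> \<in> Units E.
               gal f s = conj_by E f \<phi> \<longrightarrow>
               ?A #>\<^bsub>AutGrp E\<^esub> \<phi> = ?A #>\<^bsub>AutGrp E\<^esub> (inv \<delta> \<otimes> gal \<delta> s)"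
    then obtain \<delta> where du: "\<delta> \<in> Units E" and H: "\<forall>s \<in> carrier G. \<forall>\<phi> \<in> Units E.
               gal f s = conj_by E f \<phi> \<longrightarrow>
               ?A #>\<^bsub>AutGrp E\<^esub> \<phi> = ?A #>\<^bsub>AutGrp E\<^esub> (inv \<delta> \<otimes> gal \<delta> s)" by blast
    have idu: "inv \<delta> \<in> Units E" using du by simp
    show "\<exists>\<gamma> \<in> Units E. defined_over_K G gal (conj_by E f \<gamma>)"
      unfolding defined_over_K_def
    proof (intro bexI[of _ "inv \<delta>"] ballI)
      fix s assume s: "s \<in> carrier G"
      obtain \<phi> where p: "\<phi> \<in> Units E" and e: "gal f s = conj_by E f \<phi>" using moduli s by blast
      have gdu: "gal \<delta> s \<in> Units E" and gi: "gal (inv \<delta>) s = inv (gal \<delta> s)" using gal_unit du s by auto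
      have psu: "inv \<delta> \<otimes> gal \<delta> s \<in> Units E" using idu gdu by simp
      have "conj_by E f \<phi> = conj_by E f (inv \<delta> \<otimes> gal \<delta> s)"
        using cos_conj[OF f_end p psu] H s p e by simp
      then have "gal (conj_by E f (inv \<delta>)) s = conj_by E (conj_by E f (inv \<delta> \<otimes> gal \<delta> s)) (inv (gal \<delta> s))"
        using conj_gal[OF f_end idu s] e gi by simp
      also have "\<dots> = conj_by E f (inv \<delta> \<otimes> gal \<delta> s \<otimes> inv (gal \<delta> s))"
        using conj_comp[OF f_end psu] gdu by simp
      also have "inv \<delta> \<otimes> gal \<delta> s \<otimes> inv (gal \<delta> s) = inv \<delta>"
        using idu gdu by (simp add: E.m_assoc E.Units_closed)
      finally show "gal (conj_by E f (inv \<delta>)) s = conj_by E f (inv \<delta>)" .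
    qed (rule idu)
  qed
  show ?thesis using P1 P2 P3 P4 by blast
qed

end
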